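(* Let $U$ and $V$ be real vector spaces with $\dim(U)=\dim(V)=2$, and let $B\colon U\times U\rightarrow V$ be a symmetric bilinear map with associated quadratic map $Q_B\colon U\rightarrow V$, $Q_B(u)=B(u,u)$. Then $Q_B$ is surjective if and only if $B$ is indefinite.
   Context: For a symmetric bilinear map $B\colon U\times U\rightarrow V$ between real vector spaces, and for each $\lambda\in V^*$, let $\lambda Q_B$ denote the real-valued quadratic form on $U$ given by $\lambda Q_B(u)=\lambda\cdot Q_B(u)$. The map $B$ is called indefinite if for each nonzero $\lambda\in V^*$, the quadratic form $\lambda Q_B$ is neither positive-semidefinite nor negative-semidefinite. *)

theory Defs
  imports "HOL-Analysis.Analysis"
begin

definition sym_bilinear :: "('u::real_vector \<Rightarrow> 'u \<Rightarrow> 'v::real_vector) \<Rightarrow> bool" where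
  "sym_bilinear B \<longleftrightarrow> bilinear B \<and> (\<forall>x y. B x y = B y x)"

definition quad_map :: "('u \<Rightarrow> 'u \<Rightarrow> 'v) \<Rightarrow> 'u \<Rightarrow> 'v" where
  "quad_map B u = B u u"

definition indefinite :: "('u::real_vector \<Rightarrow> 'u \<Rightarrow> 'v::real_vector) \<Rightarrow> bool" where
  "indefinite B \<longleftrightarrow>
     (\<forall>l::'v \<Rightarrow> real. linear l \<and> l \<noteq> (\<lambda>_. 0) \<longrightarrow>
        \<not> (\<forall>u. l (quad_map B u) \<ge> 0) \<and> \<not> (\<forall>u. l (quad_map B u) \<le> 0))"

end

theory Submission
  imports Defs
begin

lemma span2_all:
  fixes a b :: "'a::real_vector"
  assumes d: "dim (UNIV :: 'a set) = 2" and ind: "independent {a, b}" and ab: "a \<noteq> b"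
  shows "\<exists>x y. u = x *\<^sub>R a + y *\<^sub>R b"
proof -
  obtain Bs :: "'a set" where Bs: "independent Bs" "UNIV \<subseteq> span Bs" "card Bs = 2"
    using basis_exists[of "UNIV :: 'a set"] d by metis
  have fin: "finite Bs"
  proof (rule ccontr)
    assume "infinite Bs"
    then have "card Bs = 0" by simp
    with Bs(3) show False by simp
  qed
  have "u \<in> span {a, b}"
  proof (rule ccontr)
    assume nu: "u \<notin> span {a, b}"
    have i3: "independent (insert u {a, b})" using independent_insertI[OF nu ind] .
    have sub: "insert u {a, b} \<subseteq> span Bs" using Bs(2) by blast
    have "card (insert u {a, b}) \<le> card Bs"
      using independent_span_bound[OF fin i3 sub] by simp
    moreover have "a \<in> span {a,b}" "b \<in> span {a,b}" by (simp_all add: span_base)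
    then have "u \<notin> {a, b}" using nu by auto
    ultimately show False using ab Bs(3) by simp
  qed
  then obtain x where "u - x *\<^sub>R a \<in> span {b}" using span_breakdown_eq[of u a "{b}"] by auto
  then obtain y where "u - x *\<^sub>R a = y *\<^sub>R b" using span_singleton[of b] by auto
  then have "u = x *\<^sub>R a + y *\<^sub>R b" by (simp add: algebra_simps)
  then show ?thesis by blast
qed

lemma exists_compl:
  fixes w :: "'a::real_vector"
  assumes d: "dim (UNIV :: 'a set) = 2" and w: "w \<noteq> 0"
  shows "\<exists>z. independent {w, z} \<and> w \<noteq> z"
proof -
  obtain Bs :: "'a set" where Bs: "independent Bs" "UNIV \<subseteq> span Bs" "card Bs = 2"
    using basis_exists[of "UNIV :: 'a set"] d by metis
  have "\<exists>z. z \<notin> span {w}"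
  proof (rule ccontr)
    assume "\<not> (\<exists>z. z \<notin> span {w})"
    then have "Bs \<subseteq> span {w}" by blast
    then have "card Bs \<le> card {w}" using independent_span_bound[OF _ Bs(1)] by blast
    then show False using Bs(3) by simp
  qed
  then obtain z where z: "z \<notin> span {w}" by blast
  have iw: "independent {w}" using w independent_insert[of w "{}"] by simp
  have "independent {z, w}" using independent_insertI[OF z iw] .
  moreover have "w \<noteq> z" using z span_base by blast
  ultimately show ?thesis by (metis insert_commute)
qed

lemma quad_expand:
  assumes sb: "sym_bilinear B" and l: "linear l"
  shows "l (B (x *\<^sub>R a + y *\<^sub>R b) (x *\<^sub>R a + y *\<^sub>R b))
     = x^2 * l (B a a) + 2*x*y * l (B a b) + y^2 * l (B b b)"
proof -
  have bl: "bilinear B" and sy: "B b a = B a b" using sb unfolding sym_bilinear_def by auto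
  have "B (x *\<^sub>R a + y *\<^sub>R b) (x *\<^sub>R a + y *\<^sub>R b)
     = (x*x) *\<^sub>R B a a + (x*y) *\<^sub>R B a b + (y*x) *\<^sub>R B b a + (y*y) *\<^sub>R B b b"
    by (simp add: bilinear_ladd[OF bl] bilinear_radd[OF bl] bilinear_lmul[OF bl] bilinear_rmul[OF bl]
        scaleR_add_right sy)
  also have "\<dots> = (x*x) *\<^sub>R B a a + (2*x*y) *\<^sub>R B a b + (y*y) *\<^sub>R B b b"
    using sy by (simp add: scaleR_left_distrib[symmetric])
  finally show ?thesis
    by (simp add: linear_add[OF l] linear_scale[OF l] power2_eq_square)
qed

lemma quad_scale:
  assumes sb: "sym_bilinear B"
  shows "quad_map B (c *\<^sub>R v) = (c*c) *\<^sub>R quad_map B v"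
  using sb unfolding sym_bilinear_def quad_map_def
  by (simp add: bilinear_lmul bilinear_rmul)

lemma hit:
  assumes sb: "sym_bilinear B" and lam: "linear lam" and mu: "linear mu"
    and dec: "\<And>v. v = mu v *\<^sub>R w + lam v *\<^sub>R z"
    and l0: "lam (quad_map B v) = 0" and m0: "mu (quad_map B v) > 0"
  shows "\<exists>u. quad_map B u = w"
proof -
  define k where "k = mu (quad_map B v)"
  have "quad_map B v = k *\<^sub>R w" using dec[of "quad_map B v"] l0 k_def by simp
  moreover have "(1 / sqrt k) * (1 / sqrt k) = 1 / k" using m0 k_def
    by (simp add: divide_simps)
  ultimately have "quad_map B ((1 / sqrt k) *\<^sub>R v) = (1 / k) *\<^sub>R (k *\<^sub>R w)"
    using quad_scale[OF sb] by simp
  also have "\<dots> = w" using m0 k_def by simp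
  finally show ?thesis by blast
qed

theorem proposition1p3:
  fixes B :: "'u::real_vector \<Rightarrow> 'u \<Rightarrow> 'v::real_vector"
  assumes "dim (UNIV :: 'u set) = 2"
    and "dim (UNIV :: 'v set) = 2"
    and "sym_bilinear B"
  shows "surj (quad_map B) \<longleftrightarrow> indefinite B"
proof
  assume s: "surj (quad_map B)"
  show "indefinite B"
    unfolding indefinite_def
  proof (intro allI impI)
    fix l :: "'v \<Rightarrow> real"
    assume h: "linear l \<and> l \<noteq> (\<lambda>_. 0)"
    then obtain v where v: "l v \<noteq> 0" by auto
    obtain u1 where u1': "v = quad_map B u1" using surjD[OF s, of v] by blast
    obtain u2 where u2': "- v = quad_map B u2" using surjD[OF s, of "- v"] by blast
    have u1: "quad_map B u1 = v" and u2: "quad_map B u2 = - v" using u1' u2' by simp_all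
    have lin: "linear l" using h by simp
    have nv: "l (- v) = - l v" using linear_neg[OF lin] .
    show "\<not> (\<forall>u. l (quad_map B u) \<ge> 0) \<and> \<not> (\<forall>u. l (quad_map B u) \<le> 0)"
    proof (cases "l v > 0")
      case True
      then have "l (quad_map B u2) < 0" "l (quad_map B u1) > 0" using u1 u2 nv by simp_all
      then show ?thesis by (meson not_le)
    next
      case False
      then have "l v < 0" using v by simp
      then have "l (quad_map B u2) > 0" "l (quad_map B u1) < 0" using u1 u2 nv by simp_all
      then show ?thesis by (meson not_le)
    qed
  qed
next
  assume ind: "indefinite B"
  have sb: "sym_bilinear B" using assms(3) .
  have bl: "bilinear B" using sb unfolding sym_bilinear_def by auto
  show "surj (quad_map B)"
  proof (rule surjI[where f = "\<lambda>w. SOME u. quad_map B u = w"], rule someI_ex)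
    fix w :: 'v
    show "\<exists>u. quad_map B u = w"
    proof (cases "w = 0")
      case True
      have "quad_map B 0 = 0" by (simp add: quad_map_def bilinear_lzero[OF bl])
      then show ?thesis using True by blast
    next
      case False
      obtain z where iz: "independent {w, z}" and wz: "w \<noteq> z"
        using exists_compl[OF assms(2) False] by blast
      obtain lam :: "'v \<Rightarrow> real" where lam: "linear lam" "\<forall>x\<in>{w,z}. lam x = (if x = w then 0 else 1)"
        using linear_independent_extend[OF iz, of "\<lambda>x. if x = w then 0 else 1"] by blast
      obtain mu :: "'v \<Rightarrow> real" where mu: "linear mu" "\<forall>x\<in>{w,z}. mu x = (if x = w then 1 else 0)"
        using linear_independent_extend[OF iz, of "\<lambda>x. if x = w then 1 else 0"] by blast
      have lw: "lam w = 0" "lam z = 1" "mu w = 1" "mu z = 0" using lam mu wz by auto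
      have dec: "v = mu v *\<^sub>R w + lam v *\<^sub>R z" for v
      proof -
        obtain p q where pq: "v = p *\<^sub>R w + q *\<^sub>R z" using span2_all[OF assms(2) iz wz] by blast
        have "mu v = p" "lam v = q" using lw pq
          by (simp_all add: linear_add[OF lam(1)] linear_scale[OF lam(1)]
              linear_add[OF mu(1)] linear_scale[OF mu(1)])
        then show ?thesis using pq by simp
      qed
      have lnz: "lam \<noteq> (\<lambda>_. 0)"
      proof
        assume "lam = (\<lambda>_. 0)"
        then have "lam z = 0" by simp
        with lw show False by simp
      qed
      have nn: "\<not> (\<forall>u. lam (quad_map B u) \<ge> 0) \<and> \<not> (\<forall>u. lam (quad_map B u) \<le> 0)"
        using ind lam(1) lnz unfolding indefinite_def by blast
      obtain u1 where u1: "lam (quad_map B u1) > 0" using nn by (auto simp: not_le)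
      obtain u2 where u2: "lam (quad_map B u2) < 0" using nn by (auto simp: not_le)
      define a where "a = lam (quad_map B u2)"
      define b where "b = lam (B u1 u2)"
      define c where "c = lam (quad_map B u1)"
      have a: "a < 0" and c: "c > 0" using u1 u2 a_def c_def by auto
      define r where "r = sqrt (b^2 - a*c)"
      have "a*c < 0" using a c by (simp add: mult_neg_pos)
      moreover have "b^2 \<ge> 0" by simp
      ultimately have dpos: "b^2 - a*c > 0" by linarith
      have r: "r > 0" unfolding r_def using dpos by simp
      have rr: "r^2 = b^2 - a*c" unfolding r_def using dpos by simp
      define t1 where "t1 = (-b + r)/a"
      define t2 where "t2 = (-b - r)/a"
      have t12: "t1 \<noteq> t2" using r a unfolding t1_def t2_def by (simp add: divide_simps)
      have root: "c + 2*t*b + t^2*a = 0" if "t = t1 \<or> t = t2" for t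
      proof -
        have "a*t + b = r \<or> a*t + b = -r" using that a unfolding t1_def t2_def by auto
        then have sq: "(a*t + b)^2 = r^2" by auto
        have "a * (c + 2*t*b + t^2*a) = (a*t + b)^2 - (b^2 - a*c)"
          by (simp add: power2_eq_square algebra_simps)
        also have "\<dots> = 0" using sq rr by simp
        finally show ?thesis using a by simp
      qed
      define v1 where "v1 = 1 *\<^sub>R u1 + t1 *\<^sub>R u2"
      define v2 where "v2 = 1 *\<^sub>R u1 + t2 *\<^sub>R u2"
      have symm: "B u2 u1 = B u1 u2" using sb unfolding sym_bilinear_def by auto
      have qv: "lam (quad_map B (1 *\<^sub>R u1 + t *\<^sub>R u2)) = c + 2*t*b + t^2*a" for t
        using quad_expand[OF sb lam(1), of 1 u1 t u2] unfolding quad_map_def a_def b_def c_def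
        by simp
      have lv1: "lam (quad_map B v1) = 0" using qv root v1_def by simp
      have lv2: "lam (quad_map B v2) = 0" using qv root v2_def by simp
      have q0: "quad_map B 0 = 0" by (simp add: quad_map_def bilinear_lzero[OF bl])
      have l0: "lam 0 = 0" by (rule linear_0[OF lam(1)])
      have u1nz: "u1 \<noteq> 0" using u1 q0 l0 by auto
      have u2ns: "u2 \<notin> span {u1}"
      proof
        assume "u2 \<in> span {u1}"
        then obtain k where "u2 = k *\<^sub>R u1" using span_singleton by blast
        then have "lam (quad_map B u2) = (k*k) * lam (quad_map B u1)"
          using quad_scale[OF sb] linear_scale[OF lam(1)] by simp
        moreover have "k*k \<ge> 0" by simp
        ultimately have "lam (quad_map B u2) \<ge> 0" using u1 by simp
        then show False using u2 by simp
      qed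
      have iu: "independent {u2, u1}"
        using independent_insertI[OF u2ns] u1nz independent_insert[of u1 "{}"] by simp
      have u12: "u1 \<noteq> u2" using u2ns span_base by blast
      have iu': "independent {u1, u2}" using iu by (metis insert_commute)
      have spanv: "\<exists>x y. u = x *\<^sub>R v1 + y *\<^sub>R v2" for u
      proof -
        obtain p q where pq: "u = p *\<^sub>R u1 + q *\<^sub>R u2" using span2_all[OF assms(1) iu' u12] by blast
        define s where "s = (q - p*t1)/(t1 - t2)"
        have e1: "(p + s) + (-s) = p" by simp
        have h: "s*(t1 - t2) = q - p*t1" using t12 unfolding s_def by simp
        have h2: "s*t1 - s*t2 = q - p*t1" using h by (simp add: right_diff_distrib)
        have h3: "(p + s)*t1 + (-s)*t2 = p*t1 + (s*t1 - s*t2)" by (simp add: algebra_simps)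
        have e2: "(p + s)*t1 + (-s)*t2 = q" using h2 h3 by linarith
        have "(p + s) *\<^sub>R v1 + (-s) *\<^sub>R v2 = ((p+s) + (-s)) *\<^sub>R u1 + ((p + s)*t1 + (-s)*t2) *\<^sub>R u2"
          unfolding v1_def v2_def by (simp add: algebra_simps)
        then have "u = (p + s) *\<^sub>R v1 + (-s) *\<^sub>R v2" using e1 e2 pq by simp
        then show ?thesis by blast
      qed
      show ?thesis
      proof (cases "mu (quad_map B v1) > 0 \<or> mu (quad_map B v2) > 0")
        case True
        then show ?thesis using hit[OF sb lam(1) mu(1) dec] lv1 lv2 by blast
      next
        case False
        then have m1: "mu (quad_map B v1) \<le> 0" and m2: "mu (quad_map B v2) \<le> 0" by auto
        define kk where "kk = lam (B v1 v2)"
        have kk: "kk \<noteq> 0"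
        proof
          assume "kk = 0"
          obtain x y where "u1 = x *\<^sub>R v1 + y *\<^sub>R v2" using spanv by blast
          then have "lam (quad_map B u1) = 0"
            using quad_expand[OF sb lam(1), of x v1 y v2] lv1 lv2 \<open>kk = 0\<close> kk_def
            unfolding quad_map_def by simp
          then show False using u1 by simp
        qed
        define g where "g = mu (B v1 v2) / kk"
        define phi where "phi = (\<lambda>v. mu v - g * lam v)"
        have lphi: "linear phi" unfolding phi_def
          by (rule linearI) (simp_all add: linear_add[OF lam(1)] linear_scale[OF lam(1)]
              linear_add[OF mu(1)] linear_scale[OF mu(1)] algebra_simps)
        have pnz: "phi \<noteq> (\<lambda>_. 0)"
        proof
          assume "phi = (\<lambda>_. 0)"
          then have "phi w = 0" by simp
          then show False using lw unfolding phi_def by simp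
        qed
        have "phi (quad_map B u) \<le> 0" for u
        proof -
          obtain x y where xy: "u = x *\<^sub>R v1 + y *\<^sub>R v2" using spanv by blast
          have e1: "lam (quad_map B u) = 2*x*y*kk"
            using quad_expand[OF sb lam(1), of x v1 y v2] lv1 lv2 xy unfolding kk_def quad_map_def
            by simp
          have e2: "mu (quad_map B u) = x^2 * mu (quad_map B v1) + 2*x*y * mu (B v1 v2) + y^2 * mu (quad_map B v2)"
            using quad_expand[OF sb mu(1), of x v1 y v2] xy unfolding quad_map_def
            by simp
          have gk: "g * kk = mu (B v1 v2)" using kk unfolding g_def by simp
          have e3: "g * (2*x*y*kk) = 2*x*y * mu (B v1 v2)" by (simp add: gk[symmetric] algebra_simps)
          have "phi (quad_map B u) = x^2 * mu (quad_map B v1) + 2*x*y * mu (B v1 v2) + y^2 * mu (quad_map B v2) - g * (2*x*y*kk)"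
            unfolding phi_def e1 e2 by simp
          also have "\<dots> = x^2 * mu (quad_map B v1) + y^2 * mu (quad_map B v2)"
            unfolding e3 by simp
          also have "\<dots> \<le> 0" using m1 m2
            by (simp add: add_nonpos_nonpos mult_nonneg_nonpos)
          finally show ?thesis .
        qed
        then show ?thesis using ind lphi pnz unfolding indefinite_def by blast
      qed
    qed
  qed
qed

end
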